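(* Let $q\in\mathbb C$ with $|q|=1$ and $q^2\neq 1$, and let $A,B$ be self-adjoint operators on a Hilbert space $\mathcal H$. Suppose $\lambda,\lambda q\in\rho(A)$ and $\mu,\mu q\in\rho(B)$. (i) If $\mathcal D$ is a linear subspace of $\mathcal D(AB)\cap\mathcal D(BA)$ and $ABf=qBAf$ for all $f\in\mathcal D$, then $\mathcal E:=(A-\lambda I)\mathcal D$ is a linear subspace of $\mathcal D(B)$ and $$BR_\lambda(A)g=qR_{\lambda q}(A)Bg\qquad(\ast)$$ for all $g\in\mathcal E$ (in particular $R_\lambda(A)g\in\mathcal D(B)$). (ii) If $\mathcal E$ is a linear subspace of $\mathcal D(B)$ such that $R_\lambda(A)g\in\mathcal D(B)$ and $(\ast)$ holds for all $g\in\mathcal E$, then every $f\in\mathcal D:=R_\lambda(A)\mathcal E$ lies in $\mathcal D(AB)\cap\mathcal D(BA)$ and satisfies $ABf=qBAf$. (iii) If $\mathcal E$ is a linear subspace of $\mathcal D(B)$ and $(\ast)$ holds for all $g\in\mathcal E$, then $$R_\lambda(A)R_\mu(B)h=qR_{\mu q}(B)R_{\lambda q}(A)h+\mu\lambda q(q-1)R_{\mu q}(B)R_{\lambda q}(A)R_\lambda(A)R_\mu(B)h\qquad(\ast\ast)$$ for all $h\in\mathcal F:=(B-\mu I)\mathcal E$. (iv) If $\mathcal F$ is a linear subspace of $\mathcal H$ such that $(\ast\ast)$ holds for all $h\in\mathcal F$, then $(\ast)$ holds (with $R_\lambda(A)g\in\mathcal D(B)$) for all $g\in\mathcal E:=R_\mu(B)\mathcal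 F$.
   Context: For a densely defined closed operator $T$, $\mathcal D(T)$ denotes its domain, $\rho(T)$ its resolvent set and $R_\lambda(T)=(T-\lambda I)^{-1}$ its resolvent for $\lambda\in\rho(T)$. Products of unbounded operators have their natural domains, e.g. $\mathcal D(AB)=\{f\in\mathcal D(B): Bf\in\mathcal D(A)\}$. *)

theory Defs
  imports "HOL-Analysis.Analysis"
begin

text \<open>HOL-Analysis has no complex inner product spaces, so we introduce the
standard notion as a type class: a complete normed space (Banach space) with a
compatible complex scalar multiplication and a complex inner product
(linear in the second argument, conjugate-linear in the first) inducing the norm.\<close>

class chilbert = banach +
  fixes scaleC :: "complex \<Rightarrow> 'a \<Rightarrow> 'a" (infixr \<open>*\<^sub>C\<close> 75)
    and cinner :: "'a \<Rightarrow> 'a \<Rightarrow> complex"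
  assumes scaleC_add_right: "a *\<^sub>C (x + y) = a *\<^sub>C x + a *\<^sub>C y"
    and scaleC_add_left: "(a + b) *\<^sub>C x = a *\<^sub>C x + b *\<^sub>C x"
    and scaleC_scaleC: "a *\<^sub>C (b *\<^sub>C x) = (a * b) *\<^sub>C x"
    and scaleC_one: "1 *\<^sub>C x = x"
    and scaleR_scaleC: "scaleR r x = complex_of_real r *\<^sub>C x"
    and cinner_commute: "cinner x y = cnj (cinner y x)"
    and cinner_add_right: "cinner x (y + z) = cinner x y + cinner x z"
    and cinner_scaleC_right: "cinner x (a *\<^sub>C y) = a * cinner x y"
    and cinner_self_nonneg: "Re (cinner x x) \<ge> 0 \<and> Im (cinner x x) = 0"
    and cinner_self_eq_zero: "cinner x x = 0 \<longleftrightarrow> x = 0"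
    and norm_eq_sqrt_cinner: "norm x = sqrt (Re (cinner x x))"

text \<open>A (possibly unbounded) operator is given by its domain D and its action T
(the values of T outside D are irrelevant).\<close>

definition csubspace :: "'a::chilbert set \<Rightarrow> bool" where
  "csubspace S \<longleftrightarrow> 0 \<in> S \<and> (\<forall>x\<in>S. \<forall>y\<in>S. x + y \<in> S) \<and> (\<forall>c. \<forall>x\<in>S. c *\<^sub>C x \<in> S)"

definition linear_op :: "'a::chilbert set \<Rightarrow> ('a \<Rightarrow> 'a) \<Rightarrow> bool" where
  "linear_op D T \<longleftrightarrow> csubspace D \<and>
     (\<forall>x\<in>D. \<forall>y\<in>D. T (x + y) = T x + T y) \<and> (\<forall>c. \<forall>x\<in>D. T (c *\<^sub>C x) = c *\<^sub>C T x)"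

definition adjoint_dom :: "'a::chilbert set \<Rightarrow> ('a \<Rightarrow> 'a) \<Rightarrow> 'a set" where
  "adjoint_dom D T = {y. \<exists>z. \<forall>x\<in>D. cinner (T x) y = cinner x z}"

text \<open>Self-adjoint: densely defined, D(T*) = D(T) and T* y = T y on D(T)
(for densely defined T the representing vector z is unique, so this says T* = T).\<close>
definition self_adjoint :: "'a::chilbert set \<Rightarrow> ('a \<Rightarrow> 'a) \<Rightarrow> bool" where
  "self_adjoint D T \<longleftrightarrow> linear_op D T \<and> closure D = UNIV \<and>
     adjoint_dom D T = D \<and> (\<forall>x\<in>D. \<forall>y\<in>D. cinner (T x) y = cinner x (T y))"

definition shift_op :: "('a::chilbert \<Rightarrow> 'a) \<Rightarrow> complex \<Rightarrow> 'a \<Rightarrow> 'a" where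
  "shift_op T l = (\<lambda>x. T x - l *\<^sub>C x)"

definition resolvent :: "'a::chilbert set \<Rightarrow> ('a \<Rightarrow> 'a) \<Rightarrow> complex \<Rightarrow> 'a \<Rightarrow> 'a" where
  "resolvent D T l = inv_into D (shift_op T l)"

definition resolvent_set :: "'a::chilbert set \<Rightarrow> ('a \<Rightarrow> 'a) \<Rightarrow> complex set" where
  "resolvent_set D T = {l. bij_betw (shift_op T l) D UNIV \<and>
       (\<exists>C. \<forall>y. norm (resolvent D T l y) \<le> C * norm y)}"

definition prod_dom :: "'a set \<Rightarrow> 'a set \<Rightarrow> ('a \<Rightarrow> 'a) \<Rightarrow> 'a set" where
  "prod_dom DS DT T = {f \<in> DT. T f \<in> DS}"

end

theory Submission
  imports Defs
begin

lemma scaleC_zero_left[simp]: "0 *\<^sub>C (x::'a::chilbert) = 0"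
  using scaleR_scaleC[of 0 x] by simp
lemma scaleC_zero_right[simp]: "a *\<^sub>C (0::'a::chilbert) = 0"
  using scaleC_add_right[of a 0 0] by simp
lemma scaleC_minus_left: "(- a) *\<^sub>C (x::'a::chilbert) = - (a *\<^sub>C x)"
  using scaleC_add_left[of a "-a" x] by (simp add: eq_neg_iff_add_eq_0 add.commute)
lemma scaleC_minus_right: "a *\<^sub>C (- (x::'a::chilbert)) = - (a *\<^sub>C x)"
  using scaleC_add_right[of a x "-x"] by (simp add: eq_neg_iff_add_eq_0 add.commute)
lemma scaleC_diff_right: "a *\<^sub>C ((x::'a::chilbert) - y) = a *\<^sub>C x - a *\<^sub>C y"
  using scaleC_add_right[of a x "-y"] scaleC_minus_right by simp
lemma scaleC_diff_left: "(a - b) *\<^sub>C (x::'a::chilbert) = a *\<^sub>C x - b *\<^sub>C x"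
  using scaleC_add_left[of a "-b" x] scaleC_minus_left by simp

lemma csub_add: "csubspace S \<Longrightarrow> x \<in> S \<Longrightarrow> y \<in> S \<Longrightarrow> x + y \<in> S"
  by (simp add: csubspace_def)
lemma csub_scale: "csubspace S \<Longrightarrow> x \<in> S \<Longrightarrow> c *\<^sub>C x \<in> S"
  by (simp add: csubspace_def)
lemma csub_zero: "csubspace S \<Longrightarrow> 0 \<in> S"
  by (simp add: csubspace_def)
lemma csub_diff: "csubspace S \<Longrightarrow> x \<in> S \<Longrightarrow> y \<in> S \<Longrightarrow> x - y \<in> S"
proof -
  assume a: "csubspace S" "x \<in> S" "y \<in> S"
  have "(-1) *\<^sub>C y \<in> S" using a csub_scale by blast
  hence "- y \<in> S" using scaleC_minus_left[of 1 y] by (simp add: scaleC_one)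
  thus ?thesis using a csub_add[of S x "-y"] by simp
qed

lemma lin_add: "linear_op D T \<Longrightarrow> x \<in> D \<Longrightarrow> y \<in> D \<Longrightarrow> T (x + y) = T x + T y"
  by (simp add: linear_op_def)
lemma lin_scale: "linear_op D T \<Longrightarrow> x \<in> D \<Longrightarrow> T (c *\<^sub>C x) = c *\<^sub>C T x"
  by (simp add: linear_op_def)
lemma lin_sub: "linear_op D T \<Longrightarrow> csubspace D"
  by (simp add: linear_op_def)
lemma lin_diff: "linear_op D T \<Longrightarrow> x \<in> D \<Longrightarrow> y \<in> D \<Longrightarrow> T (x - y) = T x - T y"
proof -
  assume a: "linear_op D T" "x \<in> D" "y \<in> D"
  have "x - y \<in> D" using a csub_diff lin_sub by blast
  have "T (x - y) + T y = T x" using lin_add[OF a(1) \<open>x - y \<in> D\<close> a(3)] by simp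
  thus ?thesis by (simp add: algebra_simps)
qed

lemma shift_add: "linear_op D T \<Longrightarrow> x \<in> D \<Longrightarrow> y \<in> D \<Longrightarrow>
   shift_op T l (x + y) = shift_op T l x + shift_op T l y"
  by (simp add: shift_op_def lin_add scaleC_add_right algebra_simps)
lemma shift_scale: "linear_op D T \<Longrightarrow> x \<in> D \<Longrightarrow>
   shift_op T l (c *\<^sub>C x) = c *\<^sub>C shift_op T l x"
  by (simp add: shift_op_def lin_scale scaleC_diff_right scaleC_scaleC mult.commute)
lemma shift_diff: "linear_op D T \<Longrightarrow> x \<in> D \<Longrightarrow> y \<in> D \<Longrightarrow>
   shift_op T l (x - y) = shift_op T l x - shift_op T l y"
  by (simp add: shift_op_def lin_diff scaleC_diff_right algebra_simps)
lemma shift_zero: "linear_op D T \<Longrightarrow> shift_op T l 0 = 0"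
  using shift_diff[of D T 0 0 l] csub_zero lin_sub by fastforce

lemma res_in: "l \<in> resolvent_set D T \<Longrightarrow> resolvent D T l y \<in> D"
  unfolding resolvent_set_def resolvent_def
  by (metis (no_types, lifting) UNIV_I bij_betw_def inv_into_into mem_Collect_eq)
lemma res_right: "l \<in> resolvent_set D T \<Longrightarrow> shift_op T l (resolvent D T l y) = y"
  unfolding resolvent_set_def resolvent_def
  by (metis (no_types, lifting) UNIV_I bij_betw_inv_into_right mem_Collect_eq)
lemma res_left: "l \<in> resolvent_set D T \<Longrightarrow> x \<in> D \<Longrightarrow> resolvent D T l (shift_op T l x) = x"
  unfolding resolvent_set_def resolvent_def
  by (metis (no_types, lifting) bij_betw_inv_into_left mem_Collect_eq)
lemma res_eqI: "l \<in> resolvent_set D T \<Longrightarrow> x \<in> D \<Longrightarrow> shift_op T l x = y \<Longrightarrow> resolvent D T l y = x"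
  using res_left by blast
lemma res_add: "linear_op D T \<Longrightarrow> l \<in> resolvent_set D T \<Longrightarrow>
  resolvent D T l (x + y) = resolvent D T l x + resolvent D T l y"
  apply (rule res_eqI, assumption)
  using csub_add lin_sub res_in apply blast
  by (simp add: shift_add res_in res_right)
lemma res_scale: "linear_op D T \<Longrightarrow> l \<in> resolvent_set D T \<Longrightarrow>
  resolvent D T l (c *\<^sub>C x) = c *\<^sub>C resolvent D T l x"
  apply (rule res_eqI, assumption)
  using csub_scale lin_sub res_in apply blast
  by (simp add: shift_scale res_in res_right)
lemma res_diff: "linear_op D T \<Longrightarrow> l \<in> resolvent_set D T \<Longrightarrow>
  resolvent D T l (x - y) = resolvent D T l x - resolvent D T l y"
  apply (rule res_eqI, assumption)
  using csub_diff lin_sub res_in apply blast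
  by (simp add: shift_diff res_in res_right)
lemma res_T: "l \<in> resolvent_set D T \<Longrightarrow> T (resolvent D T l y) = y + l *\<^sub>C resolvent D T l y"
  using res_right[of l D T y] by (simp add: shift_op_def algebra_simps)

lemma res_ident: "linear_op D T \<Longrightarrow> l \<in> resolvent_set D T \<Longrightarrow> k \<in> resolvent_set D T \<Longrightarrow>
  resolvent D T l g = resolvent D T k g + (l - k) *\<^sub>C resolvent D T k (resolvent D T l g)"
proof -
  assume L: "linear_op D T" and l: "l \<in> resolvent_set D T" and k: "k \<in> resolvent_set D T"
  define v where "v = resolvent D T l g"
  have v: "v \<in> D" using res_in[OF l] v_def by simp
  have "shift_op T k v = g + (l - k) *\<^sub>C v"
    using res_right[OF l, of g] unfolding v_def[symmetric]
    by (simp add: shift_op_def scaleC_diff_left algebra_simps)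
  hence "v = resolvent D T k (g + (l - k) *\<^sub>C v)" using res_left[OF k v] by simp
  thus ?thesis unfolding v_def[symmetric] using res_add[OF L k] res_scale[OF L k] by simp
qed

theorem mainTheorem1:
  fixes DA DB :: "'a::chilbert set" and A B :: "'a \<Rightarrow> 'a" and q l m :: complex
  assumes "cmod q = 1" and "q\<^sup>2 \<noteq> 1"
    and "self_adjoint DA A" and "self_adjoint DB B"
    and "l \<in> resolvent_set DA A" and "l * q \<in> resolvent_set DA A"
    and "m \<in> resolvent_set DB B" and "m * q \<in> resolvent_set DB B"
  shows
  "(\<forall>\<D>. csubspace \<D> \<and> \<D> \<subseteq> prod_dom DA DB B \<inter> prod_dom DB DA A \<and>
        (\<forall>f\<in>\<D>. A (B f) = q *\<^sub>C B (A f)) \<longrightarrow>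
      (let \<E> = shift_op A l ` \<D> in
        csubspace \<E> \<and> \<E> \<subseteq> DB \<and>
        (\<forall>g\<in>\<E>. resolvent DA A l g \<in> DB \<and>
           B (resolvent DA A l g) = q *\<^sub>C resolvent DA A (l * q) (B g))))
   \<and>
   (\<forall>\<E>. csubspace \<E> \<and> \<E> \<subseteq> DB \<and>
        (\<forall>g\<in>\<E>. resolvent DA A l g \<in> DB \<and>
           B (resolvent DA A l g) = q *\<^sub>C resolvent DA A (l * q) (B g)) \<longrightarrow>
      (\<forall>f\<in>resolvent DA A l ` \<E>.
         f \<in> prod_dom DA DB B \<inter> prod_dom DB DA A \<and> A (B f) = q *\<^sub>C B (A f)))
   \<and>
   (\<forall>\<E>. csubspace \<E> \<and> \<E> \<subseteq> DB \<and>
        (\<forall>g\<in>\<E>. resolvent DA A l g \<in> DB \<and>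
           B (resolvent DA A l g) = q *\<^sub>C resolvent DA A (l * q) (B g)) \<longrightarrow>
      (\<forall>h\<in>shift_op B m ` \<E>.
         resolvent DA A l (resolvent DB B m h) =
           q *\<^sub>C resolvent DB B (m * q) (resolvent DA A (l * q) h)
           + (m * l * q * (q - 1)) *\<^sub>C
               resolvent DB B (m * q) (resolvent DA A (l * q)
                 (resolvent DA A l (resolvent DB B m h)))))
   \<and>
   (\<forall>\<F>. csubspace \<F> \<and>
        (\<forall>h\<in>\<F>.
         resolvent DA A l (resolvent DB B m h) =
           q *\<^sub>C resolvent DB B (m * q) (resolvent DA A (l * q) h)
           + (m * l * q * (q - 1)) *\<^sub>C
               resolvent DB B (m * q) (resolvent DA A (l * q)
                 (resolvent DA A l (resolvent DB B m h)))) \<longrightarrow>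
      (\<forall>g\<in>resolvent DB B m ` \<F>. resolvent DA A l g \<in> DB \<and>
           B (resolvent DA A l g) = q *\<^sub>C resolvent DA A (l * q) (B g)))"
proof -
  have LA: "linear_op DA A" and LB: "linear_op DB B"
    using assms(3,4) by (auto simp: self_adjoint_def)
  have SA: "csubspace DA" and SB: "csubspace DB" using LA LB lin_sub by auto
  note l = assms(5) and lq = assms(6) and m = assms(7) and mq = assms(8)
  define c where "c = m * l * q * (q - 1)"
  have cc: "(m * q) * (l - l * q) = - c" by (simp add: c_def algebra_simps)
  have P1: "(\<forall>\<D>. csubspace \<D> \<and> \<D> \<subseteq> prod_dom DA DB B \<inter> prod_dom DB DA A \<and>
        (\<forall>f\<in>\<D>. A (B f) = q *\<^sub>C B (A f)) \<longrightarrow>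
      (let \<E> = shift_op A l ` \<D> in
        csubspace \<E> \<and> \<E> \<subseteq> DB \<and>
        (\<forall>g\<in>\<E>. resolvent DA A l g \<in> DB \<and>
           B (resolvent DA A l g) = q *\<^sub>C resolvent DA A (l * q) (B g))))"
  proof (intro allI impI)
    fix D assume H: "csubspace D \<and> D \<subseteq> prod_dom DA DB B \<inter> prod_dom DB DA A \<and>
        (\<forall>f\<in>D. A (B f) = q *\<^sub>C B (A f))"
    hence sD: "csubspace D" and DD: "\<And>f. f \<in> D \<Longrightarrow> f \<in> DA \<and> f \<in> DB \<and> B f \<in> DA \<and> A f \<in> DB"
      and com: "\<And>f. f \<in> D \<Longrightarrow> A (B f) = q *\<^sub>C B (A f)"
      by (auto simp: prod_dom_def)
    have DA': "D \<subseteq> DA" using DD by auto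
    have c1: "csubspace (shift_op A l ` D)"
      unfolding csubspace_def
    proof (intro conjI ballI allI)
      show "0 \<in> shift_op A l ` D"
        using shift_zero[OF LA, of l] csub_zero[OF sD] by (metis image_eqI)
    next
      fix x y assume "x \<in> shift_op A l ` D" "y \<in> shift_op A l ` D"
      then obtain a b where ab: "a \<in> D" "b \<in> D" "x = shift_op A l a" "y = shift_op A l b" by auto
      hence "x + y = shift_op A l (a + b)" using shift_add[OF LA, of a b l] DA' by (simp add: subsetD)
      thus "x + y \<in> shift_op A l ` D" using csub_add[OF sD ab(1,2)] by auto
    next
      fix k x assume "x \<in> shift_op A l ` D"
      then obtain a where a: "a \<in> D" "x = shift_op A l a" by auto
      hence "k *\<^sub>C x = shift_op A l (k *\<^sub>C a)" using shift_scale[OF LA] DA' by auto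
      thus "k *\<^sub>C x \<in> shift_op A l ` D" using csub_scale[OF sD a(1)] by auto
    qed
    have c2: "shift_op A l ` D \<subseteq> DB"
    proof
      fix x assume "x \<in> shift_op A l ` D"
      then obtain f where f: "f \<in> D" "x = shift_op A l f" by auto
      thus "x \<in> DB" using DD[OF f(1)] csub_diff[OF SB] csub_scale[OF SB]
        by (simp add: shift_op_def)
    qed
    have c3: "\<forall>g\<in>shift_op A l ` D. resolvent DA A l g \<in> DB \<and>
           B (resolvent DA A l g) = q *\<^sub>C resolvent DA A (l * q) (B g)"
    proof
      fix g assume "g \<in> shift_op A l ` D"
      then obtain f where f: "f \<in> D" "g = shift_op A l f" by auto
      note ff = DD[OF f(1)]
      have r: "resolvent DA A l g = f" using res_left[OF l] ff f by simp
      have Bg: "B g = B (A f) - l *\<^sub>C B f"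
        using f(2) ff lin_diff[OF LB] lin_scale[OF LB] csub_scale[OF SB]
        by (simp add: shift_op_def)
      have "shift_op A (l * q) (B f) = q *\<^sub>C B g"
        using com[OF f(1)] Bg by (simp add: shift_op_def scaleC_diff_right scaleC_scaleC mult.commute)
      hence "resolvent DA A (l * q) (q *\<^sub>C B g) = B f" using res_eqI[OF lq] ff by blast
      hence "B f = q *\<^sub>C resolvent DA A (l * q) (B g)" using res_scale[OF LA lq] by simp
      thus "resolvent DA A l g \<in> DB \<and> B (resolvent DA A l g) = q *\<^sub>C resolvent DA A (l * q) (B g)"
        using r ff by simp
    qed
    show "let \<E> = shift_op A l ` D in
        csubspace \<E> \<and> \<E> \<subseteq> DB \<and>
        (\<forall>g\<in>\<E>. resolvent DA A l g \<in> DB \<and>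
           B (resolvent DA A l g) = q *\<^sub>C resolvent DA A (l * q) (B g))"
      using c1 c2 c3 by (simp add: Let_def)
  qed
  have P2: "(\<forall>\<E>. csubspace \<E> \<and> \<E> \<subseteq> DB \<and>
        (\<forall>g\<in>\<E>. resolvent DA A l g \<in> DB \<and>
           B (resolvent DA A l g) = q *\<^sub>C resolvent DA A (l * q) (B g)) \<longrightarrow>
      (\<forall>f\<in>resolvent DA A l ` \<E>.
         f \<in> prod_dom DA DB B \<inter> prod_dom DB DA A \<and> A (B f) = q *\<^sub>C B (A f)))"
  proof (intro allI impI ballI)
    fix E f assume H: "csubspace E \<and> E \<subseteq> DB \<and>
        (\<forall>g\<in>E. resolvent DA A l g \<in> DB \<and>
           B (resolvent DA A l g) = q *\<^sub>C resolvent DA A (l * q) (B g))"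
      and "f \<in> resolvent DA A l ` E"
    then obtain g where g: "g \<in> E" "f = resolvent DA A l g" by auto
    have gB: "g \<in> DB" using H g by auto
    have fA: "f \<in> DA" using g res_in[OF l] by simp
    have fB: "f \<in> DB" and Bf: "B f = q *\<^sub>C resolvent DA A (l * q) (B g)" using H g by auto
    define x where "x = resolvent DA A (l * q) (B g)"
    have xA: "x \<in> DA" using res_in[OF lq] x_def by simp
    have BfA: "B f \<in> DA" using Bf csub_scale[OF SA xA] x_def by simp
    have Af: "A f = g + l *\<^sub>C f" using res_T[OF l] g by simp
    have AfB: "A f \<in> DB" using Af csub_add[OF SB gB] csub_scale[OF SB fB] by simp
    have Ax: "A x = B g + (l * q) *\<^sub>C x" using res_T[OF lq] x_def by simp
    have "A (B f) = q *\<^sub>C B g + (q * (l * q)) *\<^sub>C x"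
      using Bf lin_scale[OF LA xA] Ax x_def by (simp add: scaleC_add_right scaleC_scaleC)
    moreover have "B (A f) = B g + (l * q) *\<^sub>C x"
      using Af lin_add[OF LB gB] csub_scale[OF SB fB] lin_scale[OF LB fB] Bf x_def
      by (simp add: scaleC_scaleC)
    ultimately have "A (B f) = q *\<^sub>C B (A f)"
      by (simp add: scaleC_add_right scaleC_scaleC mult_ac)
    thus "f \<in> prod_dom DA DB B \<inter> prod_dom DB DA A \<and> A (B f) = q *\<^sub>C B (A f)"
      using fA fB BfA AfB by (simp add: prod_dom_def)
  qed
  have P3: "(\<forall>\<E>. csubspace \<E> \<and> \<E> \<subseteq> DB \<and>
        (\<forall>g\<in>\<E>. resolvent DA A l g \<in> DB \<and>
           B (resolvent DA A l g) = q *\<^sub>C resolvent DA A (l * q) (B g)) \<longrightarrow>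
      (\<forall>h\<in>shift_op B m ` \<E>.
         resolvent DA A l (resolvent DB B m h) =
           q *\<^sub>C resolvent DB B (m * q) (resolvent DA A (l * q) h)
           + (m * l * q * (q - 1)) *\<^sub>C
               resolvent DB B (m * q) (resolvent DA A (l * q)
                 (resolvent DA A l (resolvent DB B m h)))))"
  proof (intro allI impI ballI)
    fix E h assume H: "csubspace E \<and> E \<subseteq> DB \<and>
        (\<forall>g\<in>E. resolvent DA A l g \<in> DB \<and>
           B (resolvent DA A l g) = q *\<^sub>C resolvent DA A (l * q) (B g))"
      and "h \<in> shift_op B m ` E"
    then obtain g where g: "g \<in> E" "h = shift_op B m g" by auto
    have gB: "g \<in> DB" using H g by auto
    have rm: "resolvent DB B m h = g" using res_left[OF m gB] g by simp
    define u where "u = resolvent DA A l g"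
    have uB: "u \<in> DB" and Bu: "B u = q *\<^sub>C resolvent DA A (l * q) (B g)" using H g u_def by auto
    define a where "a = resolvent DA A (l * q) g"
    define b where "b = resolvent DA A (l * q) u"
    define x where "x = resolvent DA A (l * q) (B g)"
    have ui: "u = a + (l - l * q) *\<^sub>C b" using res_ident[OF LA l lq, of g] u_def a_def b_def by simp
    have h': "h = B g - m *\<^sub>C g" using g by (simp add: shift_op_def)
    have Rh: "resolvent DA A (l * q) h = x - m *\<^sub>C a"
      using h' res_diff[OF LA lq] res_scale[OF LA lq] x_def a_def by simp
    define w where "w = q *\<^sub>C (x - m *\<^sub>C a) + c *\<^sub>C b"
    have e1: "(m * q) *\<^sub>C u = (m * q) *\<^sub>C a - c *\<^sub>C b"
      using ui cc by (simp add: scaleC_add_right scaleC_scaleC scaleC_minus_left)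
    have "shift_op B (m * q) u = w"
      using Bu e1 unfolding w_def x_def[symmetric]
      by (simp add: shift_op_def scaleC_diff_right scaleC_scaleC mult_ac algebra_simps)
    hence "resolvent DB B (m * q) w = u" using res_eqI[OF mq uB] by blast
    hence "u = q *\<^sub>C resolvent DB B (m * q) (x - m *\<^sub>C a) + c *\<^sub>C resolvent DB B (m * q) b"
      unfolding w_def using res_add[OF LB mq] res_scale[OF LB mq] by simp
    thus "resolvent DA A l (resolvent DB B m h) =
           q *\<^sub>C resolvent DB B (m * q) (resolvent DA A (l * q) h)
           + (m * l * q * (q - 1)) *\<^sub>C
               resolvent DB B (m * q) (resolvent DA A (l * q)
                 (resolvent DA A l (resolvent DB B m h)))"
      using rm Rh unfolding u_def b_def c_def by simp
  qed
  have P4: "(\<forall>\<F>. csubspace \<F> \<and>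
        (\<forall>h\<in>\<F>.
         resolvent DA A l (resolvent DB B m h) =
           q *\<^sub>C resolvent DB B (m * q) (resolvent DA A (l * q) h)
           + (m * l * q * (q - 1)) *\<^sub>C
               resolvent DB B (m * q) (resolvent DA A (l * q)
                 (resolvent DA A l (resolvent DB B m h)))) \<longrightarrow>
      (\<forall>g\<in>resolvent DB B m ` \<F>. resolvent DA A l g \<in> DB \<and>
           B (resolvent DA A l g) = q *\<^sub>C resolvent DA A (l * q) (B g)))"
  proof (intro allI impI ballI)
    fix F g assume H: "csubspace F \<and>
        (\<forall>h\<in>F.
         resolvent DA A l (resolvent DB B m h) =
           q *\<^sub>C resolvent DB B (m * q) (resolvent DA A (l * q) h)
           + (m * l * q * (q - 1)) *\<^sub>C
               resolvent DB B (m * q) (resolvent DA A (l * q)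
                 (resolvent DA A l (resolvent DB B m h))))"
      and "g \<in> resolvent DB B m ` F"
    then obtain h where h: "h \<in> F" "g = resolvent DB B m h" by auto
    define u where "u = resolvent DA A l g"
    define a where "a = resolvent DA A (l * q) g"
    define b where "b = resolvent DA A (l * q) u"
    define w where "w = q *\<^sub>C resolvent DA A (l * q) h + c *\<^sub>C b"
    have "u = q *\<^sub>C resolvent DB B (m * q) (resolvent DA A (l * q) h) + c *\<^sub>C resolvent DB B (m * q) b"
      using H h unfolding u_def b_def c_def by simp
    hence uw: "u = resolvent DB B (m * q) w"
      unfolding w_def using res_add[OF LB mq] res_scale[OF LB mq] by simp
    have uB: "u \<in> DB" using uw res_in[OF mq] by simp
    have Bu: "B u = w + (m * q) *\<^sub>C u" using res_T[OF mq, of w] uw by simp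
    have Bg: "B g = h + m *\<^sub>C g" using res_T[OF m, of h] h by simp
    have RBg: "resolvent DA A (l * q) (B g) = resolvent DA A (l * q) h + m *\<^sub>C a"
      using Bg res_add[OF LA lq] res_scale[OF LA lq] a_def by simp
    have ui: "u = a + (l - l * q) *\<^sub>C b" using res_ident[OF LA l lq, of g] u_def a_def b_def by simp
    have e1: "(m * q) *\<^sub>C u = (m * q) *\<^sub>C a - c *\<^sub>C b"
      using ui cc by (simp add: scaleC_add_right scaleC_scaleC scaleC_minus_left)
    have "B u = q *\<^sub>C resolvent DA A (l * q) (B g)"
      using Bu e1 RBg unfolding w_def
      by (simp add: scaleC_add_right scaleC_scaleC mult_ac algebra_simps)
    thus "resolvent DA A l g \<in> DB \<and>
           B (resolvent DA A l g) = q *\<^sub>C resolvent DA A (l * q) (B g)"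
      using uB u_def by simp
  qed
  show ?thesis using P1 P2 P3 P4 by blast
qed

end
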